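(* Let $(G=(V,E),(p_e))$ be an IC model instance and $t,d\in\mathbb{Z}^+$ with $d\le t$. For every status $U$, $N(U_{\mathrm f})\ge N(U)$, where $U_{\mathrm f}$ and $N(\cdot)$ are defined in the context.
   Context: IC model: directed graph $G=(V,E)$, each edge $e$ independently live with probability $p_e\in(0,1]$. Diffusion proceeds in rounds: in each round newly activated nodes attempt to activate inactive out-neighbors along edges, succeeding iff the edge is live; attempted edges become observed. A realization $\phi=(L(\phi),D(\phi))$ is a pair of disjoint edge sets (observed live, observed dead); full if $L(\phi)\cup D(\phi)=E$; $\Psi$ is the set of full realizations; $\phi_1\prec\phi_2$ means $L(\phi_1)\subseteq L(\phi_2)$, $D(\phi_1)\subseteq D(\phi_2)$, with $\Pr[\phi_2\mid\phi_1]=\prod_{e\in L(\phi_2)\setminus L(\phi_1)}p_e\prod_{e\in D(\phi_2)\setminus D(\phi_1)}(1-p_e)$. A status is $U=(\dot S(U),\dot\phi(U))$: current active node set and observed realization. $\dot{\mathcal U}_d(U)$ is the set of possible statuses after $d$ further diffusion rounds following $U$ (without new seeds), each $U_*$ occurring with probability $\Pr[\dot\phi(U_* )\mid\dot\phi(U)]$. $A_s(S,\psi)$ is the set of nodes reachable from $S$ via a path of at most $s$ edges all in $L(\psi)$; $\Delta_s(S,V^*,\psi)=|A_s(S\cup V^*,\psi)|-|A_s(S,\psi)|$; $\Delta f_s(S,V^*,\phi)=\sum_{\psi\in\Psi,\phi\prec\psi}\Pr[\psi\mid\phi]\Delta_s(S,V^*,\psi)$. $N(U)=\sum_{U_*\in\dot{\mathcal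 U}_d(U)}\Pr[\dot\phi(U_* )\mid\dot\phi(U)]\cdot\max_{v\in V}\Delta f_{t-d}(\dot S(U_* ),\{v\},\dot\phi(U_* ))$. $U_{\mathrm f}$ is the status with $\dot S(U_{\mathrm f})=\dot S(U)$, $L(\dot\phi(U_{\mathrm f}))=L(\dot\phi(U))$ and $D(\dot\phi(U_{\mathrm f}))=D(\dot\phi(U))\cup\{(u,v)\in E:(u,v)\notin L(\dot\phi(U))\cup D(\dot\phi(U)),\ u\in\dot S(U)\}$ (every unobserved edge out of an active node is declared dead). *)

theory Defs
  imports Complex_Main
begin

type_synonym 'v edge = "'v \<times> 'v"
(* realization phi = (L(phi), D(phi)) : observed live edges, observed dead edges *)
type_synonym 'v realization = "'v edge set \<times> 'v edge set"
(* status U = (S(U), phi(U)) : active nodes, observed realization *)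
type_synonym 'v status = "'v set \<times> 'v realization"

definition ic_instance :: "'v set \<Rightarrow> 'v edge set \<Rightarrow> ('v edge \<Rightarrow> real) \<Rightarrow> bool" where
  "ic_instance V E p \<longleftrightarrow> finite V \<and> V \<noteq> {} \<and> E \<subseteq> V \<times> V \<and> (\<forall>e\<in>E. 0 < p e \<and> p e \<le> 1)"

definition realization :: "'v edge set \<Rightarrow> 'v realization \<Rightarrow> bool" where
  "realization E phi \<longleftrightarrow> fst phi \<subseteq> E \<and> snd phi \<subseteq> E \<and> fst phi \<inter> snd phi = {}"

definition full_realizations :: "'v edge set \<Rightarrow> 'v realization set" where
  "full_realizations E = {psi. realization E psi \<and> fst psi \<union> snd psi = E}"

definition prec :: "'v realization \<Rightarrow> 'v realization \<Rightarrow> bool" where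
  "prec phi1 phi2 \<longleftrightarrow> fst phi1 \<subseteq> fst phi2 \<and> snd phi1 \<subseteq> snd phi2"

(* Pr[phi2 | phi1] *)
definition cond_prob :: "('v edge \<Rightarrow> real) \<Rightarrow> 'v realization \<Rightarrow> 'v realization \<Rightarrow> real" where
  "cond_prob p phi2 phi1 =
     (\<Prod>e\<in>fst phi2 - fst phi1. p e) * (\<Prod>e\<in>snd phi2 - snd phi1. 1 - p e)"

fun reach :: "nat \<Rightarrow> 'v set \<Rightarrow> 'v edge set \<Rightarrow> 'v set" where
  "reach 0 S L = S"
| "reach (Suc s) S L = reach s S L \<union> {v. \<exists>u\<in>reach s S L. (u, v) \<in> L}"

definition A :: "nat \<Rightarrow> 'v set \<Rightarrow> 'v realization \<Rightarrow> 'v set" where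
  "A s S psi = reach s S (fst psi)"

definition Delta :: "nat \<Rightarrow> 'v set \<Rightarrow> 'v set \<Rightarrow> 'v realization \<Rightarrow> real" where
  "Delta s S W psi = real (card (A s (S \<union> W) psi)) - real (card (A s S psi))"

definition Delta_f :: "'v edge set \<Rightarrow> ('v edge \<Rightarrow> real) \<Rightarrow> nat \<Rightarrow> 'v set \<Rightarrow> 'v set \<Rightarrow> 'v realization \<Rightarrow> real" where
  "Delta_f E p s S W phi =
     (\<Sum>psi\<in>{psi\<in>full_realizations E. prec phi psi}. cond_prob p psi phi * Delta s S W psi)"

definition attempted :: "'v edge set \<Rightarrow> 'v status \<Rightarrow> 'v edge set" where
  "attempted E U = {(u, v) \<in> E. u \<in> fst U \<and> v \<notin> fst U \<and>
                      (u, v) \<notin> fst (snd U) \<union> snd (snd U)}"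

definition round_outcomes :: "'v edge set \<Rightarrow> 'v status \<Rightarrow> 'v status set" where
  "round_outcomes E U =
     {(fst U \<union> snd ` Lnew, (fst (snd U) \<union> Lnew, snd (snd U) \<union> (attempted E U - Lnew))) | Lnew.
        Lnew \<subseteq> attempted E U}"

fun statuses_after :: "'v edge set \<Rightarrow> nat \<Rightarrow> 'v status \<Rightarrow> 'v status set" where
  "statuses_after E 0 U = {U}"
| "statuses_after E (Suc d) U = \<Union> (round_outcomes E ` statuses_after E d U)"

definition N :: "'v set \<Rightarrow> 'v edge set \<Rightarrow> ('v edge \<Rightarrow> real) \<Rightarrow> nat \<Rightarrow> nat \<Rightarrow> 'v status \<Rightarrow> real" where
  "N V E p t d U =
     (\<Sum>U'\<in>statuses_after E d U.
        cond_prob p (snd U') (snd U) * Max ((\<lambda>v. Delta_f E p (t - d) (fst U') {v} (snd U')) ` V))"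

definition U_f :: "'v edge set \<Rightarrow> 'v status \<Rightarrow> 'v status" where
  "U_f E U = (fst U, (fst (snd U),
      snd (snd U) \<union> {(u, v) \<in> E. (u, v) \<notin> fst (snd U) \<union> snd (snd U) \<and> u \<in> fst U}))"

definition valid_status :: "'v set \<Rightarrow> 'v edge set \<Rightarrow> 'v status \<Rightarrow> bool" where
  "valid_status V E U \<longleftrightarrow> fst U \<subseteq> V \<and> realization E (snd U) \<and>
     (\<forall>(u, v)\<in>fst (snd U) \<union> snd (snd U). u \<in> fst U) \<and>
     (\<forall>(u, v)\<in>fst (snd U). v \<in> fst U)"

end

theory Submission
  imports Defs
begin

lemma reach_Un: "reach s (X \<union> Y) L = reach s X L \<union> reach s Y L"
  by (induction s) auto

lemma reach_mono: "X \<subseteq> Y \<Longrightarrow> L \<subseteq> L' \<Longrightarrow> reach s X L \<subseteq> reach s Y L'"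
  by (induction s) auto

lemma reach_base: "X \<subseteq> reach s X L"
  by (induction s) auto

lemma reach_sub_Suc: "x \<in> reach s X L \<Longrightarrow> x \<in> reach (Suc s) X L"
  by simp

lemma reach_step: "u \<in> reach s X L \<Longrightarrow> (u, x) \<in> L \<Longrightarrow> x \<in> reach (Suc s) X L"
  by auto

lemma reach_SucE: "x \<in> reach (Suc s) X L \<Longrightarrow> x \<notin> reach s X L \<Longrightarrow> \<exists>u. u \<in> reach s X L \<and> (u, x) \<in> L"
  by auto

lemma reach_split: "reach s {v} L \<subseteq> reach s B L \<union> reach s {v} {e\<in>L. fst e \<notin> B}"
proof (induction s)
  case 0 then show ?case by simp
next
  case (Suc s)
  show ?case
  proof
    fix x assume x: "x \<in> reach (Suc s) {v} L"
    show "x \<in> reach (Suc s) B L \<union> reach (Suc s) {v} {e\<in>L. fst e \<notin> B}"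
    proof (cases "x \<in> reach s {v} L")
      case True
      have "x \<in> reach s B L \<union> reach s {v} {e\<in>L. fst e \<notin> B}" using Suc.IH True by (rule subsetD)
      then show ?thesis by (meson UnE UnI1 UnI2 reach_sub_Suc)
    next
      case False
      then obtain u where u: "u \<in> reach s {v} L" "(u, x) \<in> L" using reach_SucE[OF x] by auto
      show ?thesis
      proof (cases "u \<in> reach s B L")
        case True then show ?thesis using u by (meson UnI1 reach_step)
      next
        case False
        have "u \<in> reach s B L \<union> reach s {v} {e\<in>L. fst e \<notin> B}" using Suc.IH u(1) by (rule subsetD)
        then have u2: "u \<in> reach s {v} {e\<in>L. fst e \<notin> B}" using False by (meson UnE)
        show ?thesis
        proof (cases "u \<in> B")
          case True
          have "u \<in> reach s B L" using reach_base[of B s L] True by (rule subsetD)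
          then show ?thesis using u by (meson UnI1 reach_step)
        next
          case False
          then have "(u, x) \<in> {e\<in>L. fst e \<notin> B}" using u by simp
          then have "x \<in> reach (Suc s) {v} {e\<in>L. fst e \<notin> B}" using reach_step[OF u2] by blast
          then show ?thesis by (rule UnI2)
        qed
      qed
    qed
  qed
qed

lemma reach_finite: "finite X \<Longrightarrow> finite L \<Longrightarrow> finite (reach s X L)"
proof (induction s)
  case 0 then show ?case by simp
next
  case (Suc s)
  have "{v. \<exists>u\<in>reach s X L. (u, v) \<in> L} \<subseteq> snd ` L"
  proof
    fix v assume "v \<in> {v. \<exists>u\<in>reach s X L. (u, v) \<in> L}"
    then obtain u where "(u, v) \<in> L" by blast
    then show "v \<in> snd ` L" by (rule rev_image_eqI) simp
  qed
  moreover have "finite (snd ` L)" using Suc.prems by simp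
  ultimately have a: "finite {v. \<exists>u\<in>reach s X L. (u, v) \<in> L}" by (rule finite_subset)
  have b: "finite (reach s X L)" using Suc.IH Suc.prems by blast
  show ?case unfolding reach.simps using b a by (rule finite_UnI)
qed

lemma reach_closed: assumes "\<And>a b. (a,b)\<in>L \<Longrightarrow> a \<in> B \<Longrightarrow> b \<in> B" shows "reach s B L = B"
proof (induction s)
  case 0 then show ?case by simp
next
  case (Suc s)
  have "{v. \<exists>u\<in>B. (u, v) \<in> L} \<subseteq> B" using assms by blast
  then show ?case using Suc by auto
qed

definition wt :: "('v edge \<Rightarrow> real) \<Rightarrow> 'v edge set \<Rightarrow> 'v edge set \<Rightarrow> real" where
  "wt p F Y = (\<Prod>e\<in>Y. p e) * (\<Prod>e\<in>F - Y. 1 - p e)"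

lemma marg_aux:
  assumes "finite D" "finite F" "D \<inter> F = {}"
  shows "(\<Sum>X\<in>Pow (F \<union> D). wt p (F \<union> D) X * h (X \<inter> F)) = (\<Sum>Y\<in>Pow F. wt p F Y * h Y)"
  using assms
proof (induction D rule: finite_induct)
  case empty
  show ?case by (rule sum.cong) (auto simp: Int_absorb2)
next
  case (insert e D)
  let ?U = "F \<union> D"
  have eU: "e \<notin> ?U" using insert by auto
  have fU: "finite ?U" using insert by auto
  have U': "F \<union> insert e D = insert e ?U" by auto
  have w1: "wt p (insert e ?U) X = (1 - p e) * wt p ?U X" if "X \<subseteq> ?U" for X
  proof -
    have "insert e ?U - X = insert e (?U - X)" using that eU by auto
    then show ?thesis unfolding wt_def using fU eU by simp
  qed
  have w2: "wt p (insert e ?U) (insert e X) = p e * wt p ?U X" if "X \<subseteq> ?U" for X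
  proof -
    have "insert e ?U - insert e X = ?U - X" using that eU by auto
    moreover have "finite X" "e \<notin> X" using that fU eU finite_subset by auto
    ultimately show ?thesis unfolding wt_def using fU eU by simp
  qed
  have h2: "insert e X \<inter> F = X \<inter> F" for X using insert by auto
  have inj: "inj_on (insert e) (Pow ?U)"
  proof (rule inj_onI)
    fix x y assume "x \<in> Pow ?U" "y \<in> Pow ?U" "insert e x = insert e y"
    then show "x = y" using eU by (metis Diff_insert_absorb PowD subsetD)
  qed
  have disj: "Pow ?U \<inter> insert e ` Pow ?U = {}" using eU by auto
  have "(\<Sum>X\<in>Pow (F \<union> insert e D). wt p (F \<union> insert e D) X * h (X \<inter> F))
      = (\<Sum>X\<in>Pow ?U. wt p (insert e ?U) X * h (X \<inter> F))
        + (\<Sum>X\<in>insert e ` Pow ?U. wt p (insert e ?U) X * h (X \<inter> F))"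
    unfolding U' Pow_insert using fU disj by (simp add: sum.union_disjoint)
  also have "(\<Sum>X\<in>insert e ` Pow ?U. wt p (insert e ?U) X * h (X \<inter> F))
      = (\<Sum>X\<in>Pow ?U. p e * (wt p ?U X * h (X \<inter> F)))"
  proof -
    have "(\<Sum>X\<in>insert e ` Pow ?U. wt p (insert e ?U) X * h (X \<inter> F))
       = (\<Sum>X\<in>Pow ?U. wt p (insert e ?U) (insert e X) * h (X \<inter> F))"
      using inj by (simp add: sum.reindex h2)
    also have "\<dots> = (\<Sum>X\<in>Pow ?U. p e * (wt p ?U X * h (X \<inter> F)))"
      by (rule sum.cong) (auto simp: w2)
    finally show ?thesis .
  qed
  also have "(\<Sum>X\<in>Pow ?U. wt p (insert e ?U) X * h (X \<inter> F))
      = (\<Sum>X\<in>Pow ?U. (1 - p e) * (wt p ?U X * h (X \<inter> F)))"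
    by (rule sum.cong) (auto simp: w1)
  also have "(\<Sum>X\<in>Pow ?U. (1 - p e) * (wt p ?U X * h (X \<inter> F)))
      + (\<Sum>X\<in>Pow ?U. p e * (wt p ?U X * h (X \<inter> F)))
      = (\<Sum>X\<in>Pow ?U. wt p ?U X * h (X \<inter> F))"
    unfolding sum.distrib[symmetric] by (rule sum.cong) (auto simp: algebra_simps)
  finally have "(\<Sum>X\<in>Pow (F \<union> insert e D). wt p (F \<union> insert e D) X * h (X \<inter> F))
      = (\<Sum>X\<in>Pow ?U. wt p ?U X * h (X \<inter> F))" .
  moreover have "D \<inter> F = {}" using insert.prems by blast
  then have "(\<Sum>X\<in>Pow ?U. wt p ?U X * h (X \<inter> F)) = (\<Sum>Y\<in>Pow F. wt p F Y * h Y)"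
    using insert.IH insert.prems by blast
  ultimately show ?case by (rule trans)
qed

lemma marg:
  assumes "finite U" "F \<subseteq> U"
  shows "(\<Sum>X\<in>Pow U. wt p U X * h (X \<inter> F)) = (\<Sum>Y\<in>Pow F. wt p F Y * h Y)"
proof -
  have e: "F \<union> (U - F) = U" using assms by blast
  have "finite F" using assms by (rule rev_finite_subset)
  have "(\<Sum>X\<in>Pow (F \<union> (U - F)). wt p (F \<union> (U - F)) X * h (X \<inter> F)) = (\<Sum>Y\<in>Pow F. wt p F Y * h Y)"
  proof -
    have d: "(U - F) \<inter> F = {}" by blast
    have fD: "finite (U - F)" using assms(1) by simp
    show ?thesis by (rule marg_aux[OF fD \<open>finite F\<close> d])
  qed
  then show ?thesis by (simp only: e)
qed

lemma full_ext_eq: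
  assumes "realization E (L, D)"
  shows "{psi\<in>full_realizations E. prec (L, D) psi}
       = (\<lambda>X. (L \<union> X, D \<union> ((E - (L \<union> D)) - X))) ` Pow (E - (L \<union> D))"
proof
  show "{psi\<in>full_realizations E. prec (L, D) psi}
       \<subseteq> (\<lambda>X. (L \<union> X, D \<union> ((E - (L \<union> D)) - X))) ` Pow (E - (L \<union> D))"
  proof
    fix psi assume "psi \<in> {psi\<in>full_realizations E. prec (L, D) psi}"
    then obtain L' D' where psi: "psi = (L', D')" "L' \<subseteq> E" "D' \<subseteq> E" "L' \<inter> D' = {}"
      "L' \<union> D' = E" "L \<subseteq> L'" "D \<subseteq> D'"
      unfolding full_realizations_def realization_def prec_def by (cases psi) auto
    have "L' - L \<in> Pow (E - (L \<union> D))" using psi by auto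
    moreover have "psi = (L \<union> (L' - L), D \<union> ((E - (L \<union> D)) - (L' - L)))" using psi by auto
    ultimately show "psi \<in> (\<lambda>X. (L \<union> X, D \<union> ((E - (L \<union> D)) - X))) ` Pow (E - (L \<union> D))"
      by (rule rev_image_eqI)
  qed
next
  show "(\<lambda>X. (L \<union> X, D \<union> ((E - (L \<union> D)) - X))) ` Pow (E - (L \<union> D))
     \<subseteq> {psi\<in>full_realizations E. prec (L, D) psi}"
    using assms unfolding full_realizations_def realization_def prec_def by auto
qed

lemma expect:
  assumes "finite E" "realization E phi" "F \<subseteq> E - (fst phi \<union> snd phi)"
  shows "(\<Sum>psi\<in>{psi\<in>full_realizations E. prec phi psi}. cond_prob p psi phi * h (fst psi \<inter> F))
       = (\<Sum>Y\<in>Pow F. wt p F Y * h Y)"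
proof -
  obtain L D where phi: "phi = (L, D)" by (cases phi)
  define Uo where "Uo = E - (L \<union> D)"
  define g where "g X = (L \<union> X, D \<union> (Uo - X))" for X
  have seq: "{psi\<in>full_realizations E. prec phi psi} = g ` Pow Uo"
    unfolding g_def Uo_def phi using full_ext_eq assms(2) phi by blast
  have inj: "inj_on g (Pow Uo)"
  proof (rule inj_onI)
    fix X Y assume "X \<in> Pow Uo" "Y \<in> Pow Uo" "g X = g Y"
    then have "L \<union> X = L \<union> Y" "X \<inter> L = {}" "Y \<inter> L = {}" unfolding g_def Uo_def by auto
    then show "X = Y" by blast
  qed
  have c: "cond_prob p (g X) phi * h (fst (g X) \<inter> F) = wt p Uo X * h (X \<inter> F)" if "X \<in> Pow Uo" for X
  proof -
    have "fst (g X) - fst phi = X" "snd (g X) - snd phi = Uo - X" using that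
      unfolding g_def Uo_def phi by auto
    moreover have "fst (g X) \<inter> F = X \<inter> F" using that assms(3) unfolding g_def Uo_def phi by auto
    ultimately show ?thesis unfolding cond_prob_def wt_def by simp
  qed
  have "(\<Sum>psi\<in>{psi\<in>full_realizations E. prec phi psi}. cond_prob p psi phi * h (fst psi \<inter> F))
      = (\<Sum>X\<in>Pow Uo. cond_prob p (g X) phi * h (fst (g X) \<inter> F))"
    unfolding seq using inj by (simp add: sum.reindex)
  also have "\<dots> = (\<Sum>X\<in>Pow Uo. wt p Uo X * h (X \<inter> F))"
    by (rule sum.cong) (simp_all add: c)
  also have "\<dots> = (\<Sum>Y\<in>Pow F. wt p F Y * h Y)"
    using assms(1,3) unfolding Uo_def phi by (intro marg) auto
  finally show ?thesis .
qed

definition inv_st :: "'v set \<Rightarrow> 'v edge set \<Rightarrow> 'v status \<Rightarrow> bool" where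
  "inv_st V E U \<longleftrightarrow> fst U \<subseteq> V \<and> realization E (snd U) \<and>
     (\<forall>e\<in>fst (snd U) \<union> snd (snd U). fst e \<in> fst U)"

lemma ro_image:
  "round_outcomes E U = (\<lambda>Ln. (fst U \<union> snd ` Ln, (fst (snd U) \<union> Ln, snd (snd U) \<union> (attempted E U - Ln))))
     ` Pow (attempted E U)"
  unfolding round_outcomes_def by auto

lemma ro_inv:
  assumes "E \<subseteq> V \<times> V" "inv_st V E U" "U' \<in> round_outcomes E U"
  shows "inv_st V E U' \<and> fst U \<subseteq> fst U' \<and> prec (snd U) (snd U')"
proof -
  obtain S L D where U: "U = (S, (L, D))" by (cases U) auto
  obtain Ln where Ln: "Ln \<subseteq> attempted E U"
    and U': "U' = (S \<union> snd ` Ln, (L \<union> Ln, D \<union> (attempted E U - Ln)))"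
    using assms(3) unfolding ro_image U by auto
  have att: "attempted E U = {(u, v) \<in> E. u \<in> S \<and> v \<notin> S \<and> (u, v) \<notin> L \<union> D}"
    unfolding attempted_def U by simp
  have i: "S \<subseteq> V" "L \<subseteq> E" "D \<subseteq> E" "L \<inter> D = {}" "\<forall>e\<in>L \<union> D. fst e \<in> S"
    using assms(2) unfolding inv_st_def realization_def U by auto
  have "snd ` Ln \<subseteq> V" using Ln assms(1) att by auto
  moreover have "L \<union> Ln \<subseteq> E" "D \<union> (attempted E U - Ln) \<subseteq> E" using i Ln att by auto
  moreover have "(L \<union> Ln) \<inter> (D \<union> (attempted E U - Ln)) = {}" using i Ln att by auto
  moreover have "\<forall>e\<in>(L \<union> Ln) \<union> (D \<union> (attempted E U - Ln)). fst e \<in> S \<union> snd ` Ln"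
    using i Ln att by auto
  ultimately show ?thesis using i unfolding inv_st_def realization_def prec_def U' U by auto
qed

lemma sa_inv:
  assumes "E \<subseteq> V \<times> V" "inv_st V E U" "U' \<in> statuses_after E d U"
  shows "inv_st V E U' \<and> fst U \<subseteq> fst U' \<and> prec (snd U) (snd U')"
  using assms(3)
proof (induction d arbitrary: U')
  case 0 then show ?case using assms(2) by (simp add: prec_def)
next
  case (Suc d)
  then obtain U'' where U'': "U'' \<in> statuses_after E d U" "U' \<in> round_outcomes E U''" by auto
  have a: "inv_st V E U'' \<and> fst U \<subseteq> fst U'' \<and> prec (snd U) (snd U'')" using Suc.IH U''(1) by blast
  have b: "inv_st V E U' \<and> fst U'' \<subseteq> fst U' \<and> prec (snd U'') (snd U')"
    using ro_inv[OF assms(1) _ U''(2)] a by blast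
  show ?case using a b unfolding prec_def by auto
qed

lemma ro_finite: "finite E \<Longrightarrow> finite (round_outcomes E U)"
proof -
  assume "finite E"
  moreover have "attempted E U \<subseteq> E" unfolding attempted_def by auto
  ultimately have "finite (attempted E U)" by (rule rev_finite_subset)
  then show ?thesis unfolding ro_image by simp
qed

lemma sa_finite: "finite E \<Longrightarrow> finite (statuses_after E d U)"
  by (induction d) (auto simp: ro_finite)

lemma cond_nonneg:
  assumes "realization E phi'" "\<forall>e\<in>E. 0 \<le> p e \<and> p e \<le> 1"
  shows "0 \<le> cond_prob p phi' phi"
proof -
  have "fst phi' \<subseteq> E" "snd phi' \<subseteq> E" using assms(1) unfolding realization_def by auto
  then have "\<forall>e\<in>fst phi' - fst phi. 0 \<le> p e" "\<forall>e\<in>snd phi' - snd phi. 0 \<le> 1 - p e"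
    using assms(2) by auto
  then show ?thesis unfolding cond_prob_def by (intro mult_nonneg_nonneg prod_nonneg) auto
qed

lemma cond_chain:
  assumes "finite E" "realization E phi'" "prec phi phi2" "prec phi2 phi'"
  shows "cond_prob p phi' phi = cond_prob p phi' phi2 * cond_prob p phi2 phi"
proof -
  have f: "finite (fst phi')" "finite (snd phi')" using assms(1,2) unfolding realization_def
    by (auto intro: rev_finite_subset)
  have e1: "fst phi' - fst phi = (fst phi' - fst phi2) \<union> (fst phi2 - fst phi)"
    and e2: "snd phi' - snd phi = (snd phi' - snd phi2) \<union> (snd phi2 - snd phi)"
    using assms(3,4) unfolding prec_def by auto
  have d1: "(fst phi' - fst phi2) \<inter> (fst phi2 - fst phi) = {}"
    and d2: "(snd phi' - snd phi2) \<inter> (snd phi2 - snd phi) = {}" by auto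
  have g1: "finite (fst phi' - fst phi2)" "finite (fst phi2 - fst phi)"
    "finite (snd phi' - snd phi2)" "finite (snd phi2 - snd phi)"
    using f assms(4) unfolding prec_def by (auto intro: rev_finite_subset)
  show ?thesis unfolding cond_prob_def e1 e2
    prod.union_disjoint[OF g1(1) g1(2) d1] prod.union_disjoint[OF g1(3) g1(4) d2]
    by (simp add: algebra_simps)
qed

lemma sum_Union_le:
  fixes g :: "'a \<Rightarrow> real"
  assumes "finite AA" "\<And>a. a \<in> AA \<Longrightarrow> finite (B a)" "\<And>x. x \<in> \<Union>(B ` AA) \<Longrightarrow> 0 \<le> g x"
  shows "sum g (\<Union>(B ` AA)) \<le> (\<Sum>a\<in>AA. sum g (B a))"
  using assms
proof (induction AA rule: finite_induct)
  case empty then show ?case by simp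
next
  case (insert a AA)
  have f1: "finite (B a)" using insert by simp
  have f2: "finite (\<Union>(B ` AA))" using insert by simp
  have "sum g (\<Union>(B ` insert a AA)) = sum g (B a \<union> \<Union>(B ` AA))" by simp
  also have "\<dots> = sum g (B a) + sum g (\<Union>(B ` AA)) - sum g (B a \<inter> \<Union>(B ` AA))"
    using f1 f2 by (rule sum_Un)
  also have "\<dots> \<le> sum g (B a) + sum g (\<Union>(B ` AA))"
  proof -
    have "0 \<le> sum g (B a \<inter> \<Union>(B ` AA))" using insert.prems(2) by (intro sum_nonneg) auto
    then show ?thesis by simp
  qed
  also have "sum g (\<Union>(B ` AA)) \<le> (\<Sum>a\<in>AA. sum g (B a))"
    using insert.IH insert.prems by auto
  finally show ?case using insert.hyps by simp
qed

lemma wt_sum1: "finite U \<Longrightarrow> (\<Sum>X\<in>Pow U. wt p U X) = 1"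
  using marg[of U "{}" p "\<lambda>_. 1"] by (simp add: wt_def)

lemma ro_sum:
  assumes "finite E" "inv_st V E U" "\<forall>e\<in>E. 0 \<le> p e \<and> p e \<le> 1"
  shows "(\<Sum>U'\<in>round_outcomes E U. cond_prob p (snd U') (snd U)) \<le> 1"
proof -
  define f where "f Ln = (fst U \<union> snd ` Ln, (fst (snd U) \<union> Ln, snd (snd U) \<union> (attempted E U - Ln)))" for Ln
  have attE: "attempted E U \<subseteq> E" unfolding attempted_def by auto
  have fa: "finite (attempted E U)" using assms(1) attE by (rule rev_finite_subset)
  have re: "realization E (snd (f Ln))" if "Ln \<in> Pow (attempted E U)" for Ln
    using assms(2) that attE unfolding inv_st_def realization_def f_def attempted_def by auto
  have "(\<Sum>U'\<in>round_outcomes E U. cond_prob p (snd U') (snd U))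
      = (\<Sum>U'\<in>f ` Pow (attempted E U). cond_prob p (snd U') (snd U))"
    unfolding ro_image f_def by simp
  also have "\<dots> \<le> (\<Sum>Ln\<in>Pow (attempted E U). cond_prob p (snd (f Ln)) (snd U))"
    using sum_image_le[of "Pow (attempted E U)" "\<lambda>U'. cond_prob p (snd U') (snd U)" f] fa
      cond_nonneg[OF re assms(3)] by (simp add: o_def)
  also have "\<dots> = (\<Sum>Ln\<in>Pow (attempted E U). wt p (attempted E U) Ln)"
  proof (rule sum.cong)
    fix Ln assume "Ln \<in> Pow (attempted E U)"
    then have "fst (snd (f Ln)) - fst (snd U) = Ln" "snd (snd (f Ln)) - snd (snd U) = attempted E U - Ln"
      unfolding f_def attempted_def by auto
    then show "cond_prob p (snd (f Ln)) (snd U) = wt p (attempted E U) Ln"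
      unfolding cond_prob_def wt_def by simp
  qed simp
  also have "\<dots> = 1" using fa by (rule wt_sum1)
  finally show ?thesis .
qed

lemma sa_sum:
  assumes "finite E" "E \<subseteq> V \<times> V" "inv_st V E U" "\<forall>e\<in>E. 0 \<le> p e \<and> p e \<le> 1"
  shows "(\<Sum>U'\<in>statuses_after E d U. cond_prob p (snd U') (snd U)) \<le> 1"
proof (induction d)
  case 0 then show ?case by (simp add: cond_prob_def)
next
  case (Suc d)
  let ?c = "\<lambda>U'. cond_prob p (snd U') (snd U)"
  have "sum ?c (statuses_after E (Suc d) U) = sum ?c (\<Union>(round_outcomes E ` statuses_after E d U))" by simp
  also have "\<dots> \<le> (\<Sum>U''\<in>statuses_after E d U. sum ?c (round_outcomes E U''))"
  proof (rule sum_Union_le)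
    show "finite (statuses_after E d U)" using assms(1) by (rule sa_finite)
    show "finite (round_outcomes E U'')" for U'' using assms(1) by (rule ro_finite)
    fix x assume "x \<in> \<Union>(round_outcomes E ` statuses_after E d U)"
    then have "x \<in> statuses_after E (Suc d) U" by simp
    then have "inv_st V E x" using sa_inv[OF assms(2,3)] by blast
    then show "0 \<le> ?c x" using cond_nonneg assms(4) unfolding inv_st_def by blast
  qed
  also have "\<dots> = (\<Sum>U''\<in>statuses_after E d U. ?c U'' * (\<Sum>U'\<in>round_outcomes E U''. cond_prob p (snd U') (snd U'')))"
  proof (rule sum.cong)
    fix U'' assume U'': "U'' \<in> statuses_after E d U"
    have a: "inv_st V E U'' \<and> fst U \<subseteq> fst U'' \<and> prec (snd U) (snd U'')" using sa_inv[OF assms(2,3) U''] .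
    have "sum ?c (round_outcomes E U'') = (\<Sum>U'\<in>round_outcomes E U''. ?c U'' * cond_prob p (snd U') (snd U''))"
    proof (rule sum.cong)
      fix U' assume U': "U' \<in> round_outcomes E U''"
      have b: "inv_st V E U' \<and> fst U'' \<subseteq> fst U' \<and> prec (snd U'') (snd U')"
        using ro_inv[OF assms(2) _ U'] a by blast
      show "?c U' = ?c U'' * cond_prob p (snd U') (snd U'')"
        using cond_chain[OF assms(1), of "snd U'" "snd U" "snd U''" p] a b unfolding inv_st_def by simp
    qed simp
    then show "sum ?c (round_outcomes E U'') = ?c U'' * (\<Sum>U'\<in>round_outcomes E U''. cond_prob p (snd U') (snd U''))"
      by (simp add: sum_distrib_left)
  qed simp
  also have "\<dots> \<le> (\<Sum>U''\<in>statuses_after E d U. ?c U'')"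
  proof (rule sum_mono)
    fix U'' assume U'': "U'' \<in> statuses_after E d U"
    have a: "inv_st V E U''" using sa_inv[OF assms(2,3) U''] by blast
    have "0 \<le> ?c U''" using cond_nonneg assms(4) a unfolding inv_st_def by blast
    moreover have "(\<Sum>U'\<in>round_outcomes E U''. cond_prob p (snd U') (snd U'')) \<le> 1"
      using ro_sum[OF assms(1) a assms(4)] .
    ultimately show "?c U'' * (\<Sum>U'\<in>round_outcomes E U''. cond_prob p (snd U') (snd U'')) \<le> ?c U''"
      by (simp add: mult_left_le)
  qed
  also have "\<dots> \<le> 1" by (rule Suc.IH)
  finally show ?case .
qed

lemma att_Uf: "attempted E (U_f E U) = {}"
  unfolding attempted_def U_f_def by auto

lemma ro_Uf: "round_outcomes E (U_f E U) = {U_f E U}"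
  unfolding ro_image att_Uf by simp

lemma sa_Uf: "statuses_after E d (U_f E U) = {U_f E U}"
  by (induction d) (simp_all add: ro_Uf)

lemma cond_self: "cond_prob p phi phi = 1"
  unfolding cond_prob_def by simp

lemma Delta_f_nonneg:
  assumes "finite E" "finite S" "\<forall>e\<in>E. 0 \<le> p e \<and> p e \<le> 1"
  shows "0 \<le> Delta_f E p s S {v} phi"
  unfolding Delta_f_def
proof (rule sum_nonneg)
  fix psi assume "psi \<in> {psi \<in> full_realizations E. prec phi psi}"
  then have re: "realization E psi" unfolding full_realizations_def by auto
  then have fL: "finite (fst psi)" using assms(1) unfolding realization_def by (auto intro: rev_finite_subset)
  have "reach s S (fst psi) \<subseteq> reach s (S \<union> {v}) (fst psi)" by (rule reach_mono) auto
  moreover have "finite (reach s (S \<union> {v}) (fst psi))" using assms(2) fL by (intro reach_finite) auto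
  ultimately have "card (reach s S (fst psi)) \<le> card (reach s (S \<union> {v}) (fst psi))" by (rule card_mono[rotated])
  then have "0 \<le> Delta s S {v} psi" unfolding Delta_def A_def by simp
  moreover have "0 \<le> cond_prob p psi phi" using re assms(3) by (rule cond_nonneg)
  ultimately show "0 \<le> cond_prob p psi phi * Delta s S {v} psi" by simp
qed

lemma compare:
  assumes fE: "finite E" and EV: "E \<subseteq> V \<times> V" and fV: "finite V"
    and val: "valid_status V E U" and inv': "inv_st V E U'"
    and SS: "fst U \<subseteq> fst U'" and pr: "prec (snd U) (snd U')"
    and pb: "\<forall>e\<in>E. 0 \<le> p e \<and> p e \<le> 1"
  shows "Delta_f E p s (fst U') {v} (snd U') \<le> Delta_f E p s (fst U) {v} (snd (U_f E U))"
proof -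
  obtain S L0 D0 where U: "U = (S, (L0, D0))" by (cases U) auto
  define S' where "S' = fst U'"
  define phi' where "phi' = snd U'"
  define phf where "phf = snd (U_f E U)"
  have phf: "phf = (L0, D0 \<union> {(u, w) \<in> E. (u, w) \<notin> L0 \<union> D0 \<and> u \<in> S})"
    unfolding phf_def U_f_def U by simp
  have vS: "S \<subseteq> V" "L0 \<subseteq> E" "D0 \<subseteq> E" "L0 \<inter> D0 = {}"
    "\<And>a b. (a, b) \<in> L0 \<union> D0 \<Longrightarrow> a \<in> S" "\<And>a b. (a, b) \<in> L0 \<Longrightarrow> b \<in> S"
    using val unfolding valid_status_def realization_def U by auto
  have S'V: "S' \<subseteq> V" and re': "realization E phi'"
    and tl': "\<forall>e\<in>fst phi' \<union> snd phi'. fst e \<in> S'"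
    using inv' unfolding inv_st_def S'_def phi'_def by auto
  have SS': "S \<subseteq> S'" using SS unfolding S'_def U by simp
  have fS: "finite S" using fV vS(1) by (rule rev_finite_subset)
  have fS': "finite S'" using fV S'V by (rule rev_finite_subset)
  define F' where "F' = {e\<in>E. fst e \<notin> S'}"
  define h where "h Y = real (card (reach s {v} Y - S'))" for Y
  have split: "{e\<in>L. fst e \<notin> S'} = L \<inter> F'" if "L \<subseteq> E" for L
    using that unfolding F'_def by auto
  have a: "Delta s S' {v} psi \<le> h (fst psi \<inter> F')"
    if "psi \<in> {psi\<in>full_realizations E. prec phi' psi}" for psi
  proof -
    define L where "L = fst psi"
    have LE: "L \<subseteq> E" using that unfolding L_def full_realizations_def realization_def by auto
    have fL: "finite L" using fE LE by (rule rev_finite_subset)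
    have "reach s (S' \<union> {v}) L = reach s S' L \<union> reach s {v} L" by (rule reach_Un)
    also have "\<dots> \<subseteq> reach s S' L \<union> (reach s {v} (L \<inter> F') - S')"
    proof -
      have "reach s {v} L \<subseteq> reach s S' L \<union> reach s {v} (L \<inter> F')"
        using reach_split[of s v L S'] split[OF LE] by simp
      moreover have "S' \<subseteq> reach s S' L" by (rule reach_base)
      ultimately show ?thesis by blast
    qed
    finally have sub: "reach s (S' \<union> {v}) L \<subseteq> reach s S' L \<union> (reach s {v} (L \<inter> F') - S')" .
    have f1: "finite (reach s S' L)" using fS' fL by (rule reach_finite)
    have f2: "finite (reach s {v} (L \<inter> F') - S')" using fL by (intro finite_Diff reach_finite) auto
    have "card (reach s (S' \<union> {v}) L) \<le> card (reach s S' L \<union> (reach s {v} (L \<inter> F') - S'))"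
      using sub f1 f2 by (intro card_mono) auto
    also have "\<dots> \<le> card (reach s S' L) + card (reach s {v} (L \<inter> F') - S')" by (rule card_Un_le)
    finally show ?thesis unfolding Delta_def A_def h_def L_def[symmetric] by simp
  qed
  have b: "h (fst psi \<inter> F') \<le> Delta s S {v} psi"
    if "psi \<in> {psi\<in>full_realizations E. prec phf psi}" for psi
  proof -
    define L where "L = fst psi"
    have psi: "L \<subseteq> E" "snd psi \<subseteq> E" "L \<inter> snd psi = {}" "L \<union> snd psi = E"
      "L0 \<subseteq> L" "snd phf \<subseteq> snd psi"
      using that unfolding L_def full_realizations_def realization_def prec_def phf by auto
    have fL: "finite L" using fE psi(1) by (rule rev_finite_subset)
    have cl: "b \<in> S" if ab: "(a, b) \<in> L" "a \<in> S" for a b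
    proof (cases "(a, b) \<in> L0")
      case True then show ?thesis by (rule vS(6))
    next
      case False
      have "(a, b) \<in> E" using ab psi(1) by blast
      then have "(a, b) \<in> snd phf" using False ab(2) unfolding phf by auto
      then have "(a, b) \<in> snd psi" using psi(6) by blast
      then show ?thesis using ab(1) psi(3) by blast
    qed
    have RS: "reach s S L = S" using cl by (rule reach_closed)
    have "reach s {v} (L \<inter> F') \<subseteq> reach s (S \<union> {v}) L" by (rule reach_mono) auto
    then have sub: "reach s {v} (L \<inter> F') - S' \<subseteq> reach s (S \<union> {v}) L - S" using SS' by blast
    have f1: "finite (reach s (S \<union> {v}) L)" using fS fL by (intro reach_finite) auto
    have "card (reach s {v} (L \<inter> F') - S') \<le> card (reach s (S \<union> {v}) L - S)"
      using sub f1 by (intro card_mono) auto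
    also have "\<dots> = card (reach s (S \<union> {v}) L) - card S"
      using reach_base[of "S \<union> {v}" s L] fS by (intro card_Diff_subset) auto
    finally have "card (reach s {v} (L \<inter> F') - S') \<le> card (reach s (S \<union> {v}) L) - card S" .
    moreover have "card S \<le> card (reach s (S \<union> {v}) L)"
      using reach_base[of "S \<union> {v}" s L] f1 by (intro card_mono) auto
    ultimately show ?thesis unfolding Delta_def A_def h_def L_def[symmetric] RS by linarith
  qed
  have F'1: "F' \<subseteq> E - (fst phi' \<union> snd phi')" using tl' unfolding F'_def by auto
  have tS: "fst e \<in> S'" if "e \<in> L0 \<union> D0" for e using vS(5) SS' that by (cases e) auto
  have F'2: "F' \<subseteq> E - (fst phf \<union> snd phf)" using tS SS' unfolding F'_def phf by auto
  have rf: "realization E phf" using vS unfolding realization_def phf by auto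
  have "Delta_f E p s S' {v} phi'
      \<le> (\<Sum>psi\<in>{psi\<in>full_realizations E. prec phi' psi}. cond_prob p psi phi' * h (fst psi \<inter> F'))"
    unfolding Delta_f_def
  proof (rule sum_mono)
    fix psi assume ps: "psi \<in> {psi\<in>full_realizations E. prec phi' psi}"
    then have "realization E psi" unfolding full_realizations_def by auto
    then have "0 \<le> cond_prob p psi phi'" using pb by (rule cond_nonneg)
    then show "cond_prob p psi phi' * Delta s S' {v} psi \<le> cond_prob p psi phi' * h (fst psi \<inter> F')"
      using a[OF ps] by (rule mult_left_mono[rotated])
  qed
  also have "\<dots> = (\<Sum>Y\<in>Pow F'. wt p F' Y * h Y)" using fE re' F'1 by (rule expect)
  also have "\<dots> = (\<Sum>psi\<in>{psi\<in>full_realizations E. prec phf psi}. cond_prob p psi phf * h (fst psi \<inter> F'))"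
    using fE rf F'2 by (rule expect[symmetric])
  also have "\<dots> \<le> Delta_f E p s S {v} phf"
    unfolding Delta_f_def
  proof (rule sum_mono)
    fix psi assume ps: "psi \<in> {psi\<in>full_realizations E. prec phf psi}"
    then have "realization E psi" unfolding full_realizations_def by auto
    then have "0 \<le> cond_prob p psi phf" using pb by (rule cond_nonneg)
    then show "cond_prob p psi phf * h (fst psi \<inter> F') \<le> cond_prob p psi phf * Delta s S {v} psi"
      using b[OF ps] by (rule mult_left_mono[rotated])
  qed
  finally show ?thesis unfolding S'_def phi'_def phf_def U by simp
qed

theorem lemma6:
  fixes V :: "'v set" and E :: "'v edge set" and p :: "'v edge \<Rightarrow> real"
    and t d :: nat and U :: "'v status"
  assumes "ic_instance V E p"
    and "0 < d" and "d \<le> t"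
    and "valid_status V E U"
  shows "N V E p t d (U_f E U) \<ge> N V E p t d U"
proof -
  have fV: "finite V" and Vne: "V \<noteq> {}" and EV: "E \<subseteq> V \<times> V" and pb0: "\<forall>e\<in>E. 0 < p e \<and> p e \<le> 1"
    using assms(1) unfolding ic_instance_def by auto
  have pb: "\<forall>e\<in>E. 0 \<le> p e \<and> p e \<le> 1" using pb0 by auto
  have fE: "finite E" using EV fV by (meson finite_SigmaI rev_finite_subset)
  have inv: "inv_st V E U" using assms(4) unfolding valid_status_def inv_st_def by auto
  have fS: "finite (fst U)" using fV assms(4) unfolding valid_status_def by (auto intro: rev_finite_subset)
  define M where "M = Max ((\<lambda>v. Delta_f E p (t - d) (fst U) {v} (snd (U_f E U))) ` V)"
  have fU: "fst (U_f E U) = fst U" unfolding U_f_def by simp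
  have NUf: "N V E p t d (U_f E U) = M"
    unfolding N_def sa_Uf M_def by (simp add: cond_self fU)
  obtain v0 where v0: "v0 \<in> V" using Vne by blast
  have fimg: "finite ((\<lambda>v. Delta_f E p (t - d) (fst U) {v} (snd (U_f E U))) ` V)" using fV by simp
  have M0: "0 \<le> M"
  proof -
    have "0 \<le> Delta_f E p (t - d) (fst U) {v0} (snd (U_f E U))" using fE fS pb by (rule Delta_f_nonneg)
    also have "\<dots> \<le> M" unfolding M_def using fimg v0 by (intro Max_ge) auto
    finally show ?thesis .
  qed
  have trm: "cond_prob p (snd U') (snd U) * Max ((\<lambda>v. Delta_f E p (t - d) (fst U') {v} (snd U')) ` V)
      \<le> cond_prob p (snd U') (snd U) * M" if U': "U' \<in> statuses_after E d U" for U'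
  proof -
    have i: "inv_st V E U' \<and> fst U \<subseteq> fst U' \<and> prec (snd U) (snd U')" using sa_inv[OF EV inv U'] .
    have c0: "0 \<le> cond_prob p (snd U') (snd U)" using i pb cond_nonneg unfolding inv_st_def by blast
    have "Max ((\<lambda>v. Delta_f E p (t - d) (fst U') {v} (snd U')) ` V) \<le> M"
    proof (subst Max_le_iff)
      show "finite ((\<lambda>v. Delta_f E p (t - d) (fst U') {v} (snd U')) ` V)" using fV by simp
      show "(\<lambda>v. Delta_f E p (t - d) (fst U') {v} (snd U')) ` V \<noteq> {}" using Vne by simp
      show "\<forall>a\<in>(\<lambda>v. Delta_f E p (t - d) (fst U') {v} (snd U')) ` V. a \<le> M"
      proof
        fix a assume "a \<in> (\<lambda>v. Delta_f E p (t - d) (fst U') {v} (snd U')) ` V"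
        then obtain v where v: "v \<in> V" "a = Delta_f E p (t - d) (fst U') {v} (snd U')" by blast
        have "a \<le> Delta_f E p (t - d) (fst U) {v} (snd (U_f E U))"
          unfolding v(2) using compare[OF fE EV fV assms(4), of U' p] i pb by blast
        also have "\<dots> \<le> M" unfolding M_def using fimg v(1) by (intro Max_ge) auto
        finally show "a \<le> M" .
      qed
    qed
    then show ?thesis using c0 by (rule mult_left_mono)
  qed
  have "N V E p t d U \<le> (\<Sum>U'\<in>statuses_after E d U. cond_prob p (snd U') (snd U) * M)"
    unfolding N_def by (rule sum_mono) (rule trm)
  also have "\<dots> = M * (\<Sum>U'\<in>statuses_after E d U. cond_prob p (snd U') (snd U))"
    by (simp add: sum_distrib_left mult.commute)
  also have "\<dots> \<le> M * 1" using sa_sum[OF fE EV inv pb, of d] M0 by (rule mult_left_mono)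
  finally show ?thesis using NUf by simp
qed

end
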